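(* For every model class $\mathcal M\subseteq\mathcal M^+$, every $\gamma>0$ and every $\bar M\in\mathcal M^+$, $$\mathrm{dec}^{\mathrm o}_{\mathrm r,\gamma}(\mathcal M,\bar M)\le\mathrm{dec}^{\mathrm c}_{\mathrm r,\gamma^{-1/2}}(\mathcal M,\bar M).$$
   Context: Models are kernels $M:\Pi\to\Delta([0,1]\times\mathcal O)$ (rewards in $[0,1]$); $\mathcal M^+$ is the set of all models. $f^M(\pi)=\mathbb E_{(r,o)\sim M(\pi)}[r]$, $\pi_M\in\arg\max f^M$, $g^M(\pi)=f^M(\pi_M)-f^M(\pi)$; $D^2_H$ is squared Hellinger distance. Constrained regret DEC $\mathrm{dec}^{\mathrm c}_{\mathrm r,\varepsilon}(\mathcal M,\bar M)=\inf_{p\in\Delta(\Pi)}\sup_{M\in\mathcal M}\{\mathbb E_{\pi\sim p}[g^M(\pi)]:\mathbb E_{\pi\sim p}[D^2_H(M(\pi),\bar M(\pi))]\le\varepsilon^2\}$ (value $0$ if empty); offset regret DEC $\mathrm{dec}^{\mathrm o}_{\mathrm r,\gamma}(\mathcal M,\bar M)=\inf_{p\in\Delta(\Pi)}\sup_{M\in\mathcal M}\mathbb E_{\pi\sim p}[g^M(\pi)-\gamma D^2_H(M(\pi),\bar M(\pi))]$. *)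

theory Defs
  imports "HOL-Probability.Probability"
begin

definition is_model :: "'o measure \<Rightarrow> ('pi \<Rightarrow> (real \<times> 'o) measure) \<Rightarrow> bool" where
  "is_model Obs M \<longleftrightarrow> (\<forall>\<pi>. prob_space (M \<pi>) \<and> sets (M \<pi>) = sets (borel \<Otimes>\<^sub>M Obs)
       \<and> emeasure (M \<pi>) ({0..1} \<times> space Obs) = 1)"

definition models :: "'o measure \<Rightarrow> ('pi \<Rightarrow> (real \<times> 'o) measure) set" where
  "models Obs = {M. is_model Obs M}"

definition fM :: "('pi \<Rightarrow> (real \<times> 'o) measure) \<Rightarrow> 'pi \<Rightarrow> real" where
  "fM M \<pi> = (\<integral>z. fst z \<partial>(M \<pi>))"

text \<open>Regret g^M(pi) = f^M(pi_M) - f^M(pi), with f^M(pi_M) = max f^M = sup f^M.\<close>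
definition gM :: "('pi \<Rightarrow> (real \<times> 'o) measure) \<Rightarrow> 'pi \<Rightarrow> real" where
  "gM M \<pi> = (SUP \<pi>'. fM M \<pi>') - fM M \<pi>"

text \<open>Squared Hellinger distance, computed via densities w.r.t. the dominating measure P + Q.\<close>
definition sum_meas :: "'a measure \<Rightarrow> 'a measure \<Rightarrow> 'a measure" where
  "sum_meas P Q = measure_of (space P) (sets P) (\<lambda>A. emeasure P A + emeasure Q A)"

definition hellinger_sq :: "'a measure \<Rightarrow> 'a measure \<Rightarrow> real" where
  "hellinger_sq P Q =
     (let \<nu> = sum_meas P Q in
      \<integral>z. (sqrt (enn2real (RN_deriv \<nu> P z)) - sqrt (enn2real (RN_deriv \<nu> Q z)))\<^sup>2 \<partial>\<nu>)"

definition Eg :: "'pi pmf \<Rightarrow> ('pi \<Rightarrow> (real \<times> 'o) measure) \<Rightarrow> real" where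
  "Eg p M = measure_pmf.expectation p (\<lambda>\<pi>. gM M \<pi>)"

definition EH :: "'pi pmf \<Rightarrow> ('pi \<Rightarrow> (real \<times> 'o) measure) \<Rightarrow> ('pi \<Rightarrow> (real \<times> 'o) measure) \<Rightarrow> real" where
  "EH p M Mbar = measure_pmf.expectation p (\<lambda>\<pi>. hellinger_sq (M \<pi>) (Mbar \<pi>))"

text \<open>Constrained regret DEC (value 0 when the constraint set is empty).\<close>
definition dec_c :: "('pi \<Rightarrow> (real \<times> 'o) measure) set \<Rightarrow> ('pi \<Rightarrow> (real \<times> 'o) measure) \<Rightarrow> real \<Rightarrow> ereal" where
  "dec_c Ms Mbar \<epsilon> =
     (INF p. (let S = {M \<in> Ms. EH p M Mbar \<le> \<epsilon>\<^sup>2} in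
              if S = {} then 0 else (SUP M\<in>S. ereal (Eg p M))))"

definition dec_o :: "('pi \<Rightarrow> (real \<times> 'o) measure) set \<Rightarrow> ('pi \<Rightarrow> (real \<times> 'o) measure) \<Rightarrow> real \<Rightarrow> ereal" where
  "dec_o Ms Mbar \<gamma> = (INF p. (SUP M\<in>Ms. ereal (Eg p M - \<gamma> * EH p M Mbar)))"

end

theory Submission
  imports Defs
begin

lemma fM_bounds:
  assumes "is_model Obs M"
  shows "0 \<le> fM M \<pi> \<and> fM M \<pi> \<le> 1"
proof -
  interpret P: prob_space "M \<pi>" using assms unfolding is_model_def by blast
  have ss: "sets (M \<pi>) = sets (borel \<Otimes>\<^sub>M Obs)" using assms unfolding is_model_def by blast
  have em: "emeasure (M \<pi>) ({0..1} \<times> space Obs) = 1" using assms unfolding is_model_def by blast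
  have inset: "{0..1} \<times> space Obs \<in> sets (M \<pi>)"
    using em emeasure_notin_sets by fastforce
  have "AE z in M \<pi>. z \<in> {0..1} \<times> space Obs"
    using P.AE_in_set_eq_1[OF inset] em by (simp add: P.emeasure_eq_measure)
  then have ae: "AE z in M \<pi>. 0 \<le> fst z \<and> fst z \<le> (1::real)"
    by eventually_elim auto
  have meas: "fst \<in> borel_measurable (M \<pi>)"
    unfolding measurable_cong_sets[OF ss refl] by (rule measurable_fst)
  have int: "integrable (M \<pi>) fst"
    apply (rule P.integrable_const_bound[where B=1])
    using ae apply eventually_elim apply auto[1]
    using meas by simp
  show ?thesis unfolding fM_def
    using P.integral_le_const[OF int] integral_nonneg_AE[of fst "M \<pi>"] ae
    by (auto elim: AE_mp)
qed

lemma gM_bounds: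
  assumes "is_model Obs M"
  shows "0 \<le> gM M \<pi> \<and> gM M \<pi> \<le> 1"
proof -
  have b: "\<And>x. 0 \<le> fM M x \<and> fM M x \<le> 1" using fM_bounds[OF assms] by blast
  have bdd: "bdd_above (range (fM M))" using b by (auto intro!: bdd_aboveI[where M=1])
  have "fM M \<pi> \<le> (SUP x. fM M x)" by (rule cSUP_upper[OF UNIV_I bdd])
  moreover have "(SUP x. fM M x) \<le> 1" using b by (intro cSUP_least) auto
  ultimately show ?thesis unfolding gM_def using b[of \<pi>] by auto
qed

lemma Eg_bounds:
  assumes "is_model Obs M"
  shows "0 \<le> Eg p M \<and> Eg p M \<le> 1"
proof -
  have b: "\<And>x. 0 \<le> gM M x \<and> gM M x \<le> 1" using gM_bounds[OF assms] by blast
  have int: "integrable (measure_pmf p) (gM M)"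
    by (rule measure_pmf.integrable_const_bound[where B=1]) (use b in auto)
  show ?thesis unfolding Eg_def
    using measure_pmf.integral_le_const[OF int] b
    by (auto intro: integral_nonneg)
qed

lemma EH_nonneg: "0 \<le> EH p M Mbar"
  unfolding EH_def hellinger_sq_def Let_def
  by simp

theorem proposition4p3:
  fixes Obs :: "'o measure"
    and Ms :: "('pi \<Rightarrow> (real \<times> 'o) measure) set"
    and Mbar :: "'pi \<Rightarrow> (real \<times> 'o) measure"
    and \<gamma> :: real
  assumes "Ms \<subseteq> models Obs"
    and "\<gamma> > 0"
    and "Mbar \<in> models Obs"
  shows "dec_o Ms Mbar \<gamma> \<le> dec_c Ms Mbar (\<gamma> powr (-1/2))"
proof -
  have eps: "(\<gamma> powr (-1/2))\<^sup>2 = 1 / \<gamma>"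
  proof -
    have "(\<gamma> powr (-1/2))\<^sup>2 = \<gamma> powr (-1/2) * \<gamma> powr (-1/2)" by (simp add: power2_eq_square)
    also have "\<dots> = \<gamma> powr (-1)" by (simp add: powr_add[symmetric])
    also have "\<dots> = 1 / \<gamma>" using assms(2) by (simp add: powr_minus_divide)
    finally show ?thesis .
  qed
  have mod: "\<And>M. M \<in> Ms \<Longrightarrow> is_model Obs M" using assms(1) unfolding models_def by auto
  have key: "(SUP M\<in>Ms. ereal (Eg p M - \<gamma> * EH p M Mbar)) \<le>
      (let S = {M \<in> Ms. EH p M Mbar \<le> (\<gamma> powr (-1/2))\<^sup>2} in
              if S = {} then 0 else (SUP M\<in>S. ereal (Eg p M)))" for p
  proof (rule SUP_least)
    fix M assume M: "M \<in> Ms"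
    define S where "S = {M \<in> Ms. EH p M Mbar \<le> (\<gamma> powr (-1/2))\<^sup>2}"
    have rhs0: "0 \<le> (if S = {} then 0 else (SUP M\<in>S. ereal (Eg p M)))"
    proof (cases "S = {}")
      case False
      then obtain M' where "M' \<in> S" by auto
      then have "ereal (Eg p M') \<le> (SUP M\<in>S. ereal (Eg p M))" by (rule SUP_upper)
      moreover have "0 \<le> Eg p M'" using Eg_bounds[OF mod] \<open>M' \<in> S\<close> S_def by auto
      moreover have "(0::ereal) \<le> ereal (Eg p M')" using \<open>0 \<le> Eg p M'\<close> by simp
      ultimately have "(0::ereal) \<le> (SUP M\<in>S. ereal (Eg p M))" by (meson order_trans)
      then show ?thesis using False by simp
    qed simp
    have "ereal (Eg p M - \<gamma> * EH p M Mbar) \<le> (if S = {} then 0 else (SUP M\<in>S. ereal (Eg p M)))"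
    proof (cases "EH p M Mbar \<le> 1 / \<gamma>")
      case True
      then have "M \<in> S" using M S_def eps by auto
      then have "ereal (Eg p M) \<le> (SUP M\<in>S. ereal (Eg p M))" by (rule SUP_upper)
      moreover have "Eg p M - \<gamma> * EH p M Mbar \<le> Eg p M"
        using EH_nonneg[of p M Mbar] assms(2) by simp
      then have "ereal (Eg p M - \<gamma> * EH p M Mbar) \<le> ereal (Eg p M)" by simp
      ultimately have "ereal (Eg p M - \<gamma> * EH p M Mbar) \<le> (SUP M\<in>S. ereal (Eg p M))"
        by (meson order_trans)
      then show ?thesis using \<open>M \<in> S\<close> by auto
    next
      case False
      then have "1 < \<gamma> * EH p M Mbar" using assms(2) by (simp add: field_simps)
      then have "Eg p M - \<gamma> * EH p M Mbar \<le> 0" using Eg_bounds[OF mod[OF M], of p] by linarith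
      then have "ereal (Eg p M - \<gamma> * EH p M Mbar) \<le> 0" by (simp add: zero_ereal_def)
      then show ?thesis using rhs0 by (meson order_trans)
    qed
    then show "ereal (Eg p M - \<gamma> * EH p M Mbar) \<le> (let S = {M \<in> Ms. EH p M Mbar \<le> (\<gamma> powr (-1/2))\<^sup>2} in
              if S = {} then 0 else (SUP M\<in>S. ereal (Eg p M)))"
      unfolding S_def Let_def .
  qed
  show ?thesis unfolding dec_o_def dec_c_def
    by (rule INF_mono) (use key in blast)
qed

end
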